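(* Let $J=JCK(Z,\delta)$. The restriction map $\mathrm{Der}(J)_{\bar0}\to\mathrm{Der}(J_{\bar0})$, $\partial\mapsto\partial|_{J_{\bar0}}$, is injective.
   Context: Let $\mathbb F$ be a field of characteristic $\neq 2$, $Z$ a unital commutative associative $\mathbb F$-algebra, and $\delta$ a derivation of $Z$ such that $Z\delta(Z)=Z$ (the $\mathbb F$-span of all products $f\delta(g)$, $f,g\in Z$, is $Z$). The Cheng-Kac Jordan superalgebra $J=JCK(Z,\delta)=J_{\bar0}\oplus J_{\bar1}$ is defined as follows: $J_{\bar0}=Z1\oplus Zw_1\oplus Zw_2\oplus Zw_3$ and $J_{\bar1}=Zx\oplus Zx_1\oplus Zx_2\oplus Zx_3$ are free $Z$-modules of rank 4; $J_{\bar0}$ is the $Z$-algebra $(\mathbb F1\oplus\mathbb Fw_1\oplus\mathbb Fw_2\oplus\mathbb Fw_3)\otimes_{\mathbb F}Z$ with $1$ the identity, $w_1^2=w_2^2=1$, $w_3^2=-1$, $w_iw_j=0$ for $i\ne j$. For $f,g\in Z$ and $i,j\in\{1,2,3\}$ the remaining products are: $f(gx)=(fg)x$, $f(gx_j)=(fg)x_j$, $(fw_i)(gx)=(\delta(f)g)x_i$, $(fw_i)(gx_j)=-(fg)x_{i\times j}$, $(fx)(gx)=\delta(f)g-f\delta(g)$, $(fx)(gx_j)=-(fg)w_j$, $(fx_i)(gx)=(fg)w_i$, $(fx_i)(gx_j)=0$, extended by supercommutativity ($ab=(-1)^{|a||b|}ba$), where $x_{1\times2}=-x_{2\times1}=x_3$,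 $x_{1\times3}=-x_{3\times1}=x_2$, $x_{3\times2}=-x_{2\times3}=x_1$, $x_{i\times i}=0$. Derivations are super derivations: homogeneous linear $d$ with $d(ab)=d(a)b+(-1)^{|d||a|}ad(b)$. *)

theory Defs
  imports Main "HOL.Modules" "HOL-Library.FuncSet"
begin

text \<open>Z is a type of class comm_ring_1 (unital, commutative, associative);
  the F-algebra structure is a scalar multiplication sc making Z an F-module
  that is compatible with the ring multiplication.\<close>

definition is_F_algebra :: "('f::field \<Rightarrow> 'z::comm_ring_1 \<Rightarrow> 'z) \<Rightarrow> bool" where
  "is_F_algebra sc \<longleftrightarrow> module sc \<and> (\<forall>a x y. sc a (x * y) = sc a x * y)"

definition is_derivation :: "('f::field \<Rightarrow> 'z::comm_ring_1 \<Rightarrow> 'z) \<Rightarrow> ('z \<Rightarrow> 'z) \<Rightarrow> bool" where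
  "is_derivation sc \<delta> \<longleftrightarrow>
     (\<forall>x y. \<delta> (x + y) = \<delta> x + \<delta> y) \<and> (\<forall>a x. \<delta> (sc a x) = sc a (\<delta> x)) \<and>
     (\<forall>x y. \<delta> (x * y) = \<delta> x * y + x * \<delta> y)"

text \<open>Z\<delta>(Z) = Z: every element of Z is an F-linear combination of products f \<delta>(g).\<close>
definition span_cond :: "('f::field \<Rightarrow> 'z::comm_ring_1 \<Rightarrow> 'z) \<Rightarrow> ('z \<Rightarrow> 'z) \<Rightarrow> bool" where
  "span_cond sc \<delta> \<longleftrightarrow>
     (\<forall>z. \<exists>n c f g. z = (\<Sum>i<(n::nat). sc (c i) (f i * \<delta> (g i))))"

datatype idx = I1 | I2 | I3

text \<open>Basis of J over Z: One = 1, W i = w_i (even); X = x, Xs i = x_i (odd).\<close>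
datatype cb = One | W idx | X | Xs idx

definition cb_all :: "cb set" where
  "cb_all = {One, W I1, W I2, W I3, X, Xs I1, Xs I2, Xs I3}"

fun cb_odd :: "cb \<Rightarrow> bool" where
  "cb_odd One = False" | "cb_odd (W _) = False" | "cb_odd X = True" | "cb_odd (Xs _) = True"

text \<open>An element of J is its coordinate vector with respect to the Z-basis.\<close>
type_synonym 'z jck = "cb \<Rightarrow> 'z"

definition single :: "cb \<Rightarrow> 'z::comm_ring_1 \<Rightarrow> 'z jck" where
  "single b z = (\<lambda>c. if c = b then z else 0)"

text \<open>cross_coeff i j k = coefficient of x_k in x_{i \<times> j}.\<close>
fun cross_coeff :: "idx \<Rightarrow> idx \<Rightarrow> idx \<Rightarrow> int" where
  "cross_coeff I1 I2 I3 = 1"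
| "cross_coeff I2 I1 I3 = -1"
| "cross_coeff I1 I3 I2 = 1"
| "cross_coeff I3 I1 I2 = -1"
| "cross_coeff I3 I2 I1 = 1"
| "cross_coeff I2 I3 I1 = -1"
| "cross_coeff _ _ _ = 0"

definition cross_vec :: "idx \<Rightarrow> idx \<Rightarrow> 'z::comm_ring_1 \<Rightarrow> 'z jck" where
  "cross_vec i j z = (\<lambda>c. case c of Xs k \<Rightarrow> of_int (cross_coeff i j k) * z | _ \<Rightarrow> 0)"

fun wsq :: "idx \<Rightarrow> int" where
  "wsq I1 = 1" | "wsq I2 = 1" | "wsq I3 = -1"

text \<open>bprod \<delta> p f q g = the product (f b_p)(g b_q) of Z-multiples of basis elements.\<close>
fun bprod :: "('z::comm_ring_1 \<Rightarrow> 'z) \<Rightarrow> cb \<Rightarrow> 'z \<Rightarrow> cb \<Rightarrow> 'z \<Rightarrow> 'z jck" where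
  "bprod \<delta> One f q g = single q (f * g)"
| "bprod \<delta> (W i) f One g = single (W i) (f * g)"
| "bprod \<delta> X f One g = single X (f * g)"
| "bprod \<delta> (Xs i) f One g = single (Xs i) (f * g)"
| "bprod \<delta> (W i) f (W j) g = (if i = j then single One (of_int (wsq i) * (f * g)) else (\<lambda>_. 0))"
| "bprod \<delta> (W i) f X g = single (Xs i) (\<delta> f * g)"
| "bprod \<delta> X f (W i) g = single (Xs i) (\<delta> g * f)"
| "bprod \<delta> (W i) f (Xs j) g = cross_vec i j (- (f * g))"
| "bprod \<delta> (Xs j) f (W i) g = cross_vec i j (- (g * f))"
| "bprod \<delta> X f X g = single One (\<delta> f * g - f * \<delta> g)"
| "bprod \<delta> X f (Xs j) g = single (W j) (- (f * g))"
| "bprod \<delta> (Xs i) f X g = single (W i) (f * g)"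
| "bprod \<delta> (Xs i) f (Xs j) g = (\<lambda>_. 0)"

definition jck_mult :: "('z::comm_ring_1 \<Rightarrow> 'z) \<Rightarrow> 'z jck \<Rightarrow> 'z jck \<Rightarrow> 'z jck" where
  "jck_mult \<delta> u v = (\<lambda>c. \<Sum>p\<in>cb_all. \<Sum>q\<in>cb_all. bprod \<delta> p (u p) q (v q) c)"

definition jck_scale :: "('f \<Rightarrow> 'z \<Rightarrow> 'z) \<Rightarrow> 'f \<Rightarrow> 'z jck \<Rightarrow> 'z jck" where
  "jck_scale sc a u = (\<lambda>c. sc a (u c))"

definition jck_add :: "'z::comm_ring_1 jck \<Rightarrow> 'z jck \<Rightarrow> 'z jck" where
  "jck_add u v = (\<lambda>c. u c + v c)"

definition J_even :: "'z::comm_ring_1 jck set" where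
  "J_even = {u. \<forall>c. cb_odd c \<longrightarrow> u c = 0}"

definition J_odd :: "'z::comm_ring_1 jck set" where
  "J_odd = {u. \<forall>c. \<not> cb_odd c \<longrightarrow> u c = 0}"

text \<open>Even (degree 0) superderivations of J: F-linear maps preserving J_0 and J_1
  and satisfying d(ab) = d(a)b + a d(b).  These form Der(J)_0.\<close>
definition even_der :: "('f::field \<Rightarrow> 'z::comm_ring_1 \<Rightarrow> 'z) \<Rightarrow> ('z \<Rightarrow> 'z)
    \<Rightarrow> ('z jck \<Rightarrow> 'z jck) \<Rightarrow> bool" where
  "even_der sc \<delta> d \<longleftrightarrow>
     (\<forall>u v. d (jck_add u v) = jck_add (d u) (d v)) \<and>
     (\<forall>a u. d (jck_scale sc a u) = jck_scale sc a (d u)) \<and>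
     d ` J_even \<subseteq> J_even \<and> d ` J_odd \<subseteq> J_odd \<and>
     (\<forall>u v. d (jck_mult \<delta> u v) = jck_add (jck_mult \<delta> (d u) v) (jck_mult \<delta> u (d v)))"

end

theory Submission
  imports Defs
begin
lemma sum_cb_all: "sum f cb_all = f One + f (W I1) + f (W I2) + f (W I3) + f X + f (Xs I1) + f (Xs I2) + f (Xs I3)"
  by (simp add: cb_all_def algebra_simps)

lemma mult_One: "jck_mult \<delta> u v One = u One * v One + u (W I1) * v (W I1) + u (W I2) * v (W I2) - u (W I3) * v (W I3) + (\<delta> (u X) * v X - u X * \<delta> (v X))"
  by (simp add: jck_mult_def sum_cb_all single_def cross_vec_def)

lemma mult_W:
  "jck_mult \<delta> u v (W k) = u One * v (W k) + u (W k) * v One - u X * v (Xs k) + u (Xs k) * v X"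
  by (cases k; simp add: jck_mult_def sum_cb_all single_def cross_vec_def)

lemma mult_X: "jck_mult \<delta> u v X = u One * v X + u X * v One"
  by (simp add: jck_mult_def sum_cb_all single_def cross_vec_def)

lemma mult_Xs1: "jck_mult \<delta> u v (Xs I1) = u One * v (Xs I1) + u (Xs I1) * v One + \<delta> (u (W I1)) * v X + \<delta> (v (W I1)) * u X
   - u (W I3) * v (Xs I2) + u (W I2) * v (Xs I3) - v (W I3) * u (Xs I2) + v (W I2) * u (Xs I3)"
  by (simp add: jck_mult_def sum_cb_all single_def cross_vec_def)

lemma mult_Xs2: "jck_mult \<delta> u v (Xs I2) = u One * v (Xs I2) + u (Xs I2) * v One + \<delta> (u (W I2)) * v X + \<delta> (v (W I2)) * u X
   - u (W I1) * v (Xs I3) + u (W I3) * v (Xs I1) - v (W I1) * u (Xs I3) + v (W I3) * u (Xs I1)"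
  by (simp add: jck_mult_def sum_cb_all single_def cross_vec_def)

lemma mult_Xs3: "jck_mult \<delta> u v (Xs I3) = u One * v (Xs I3) + u (Xs I3) * v One + \<delta> (u (W I3)) * v X + \<delta> (v (W I3)) * u X
   - u (W I1) * v (Xs I2) + u (W I2) * v (Xs I1) - v (W I1) * u (Xs I2) + v (W I2) * u (Xs I1)"
  by (simp add: jck_mult_def sum_cb_all single_def cross_vec_def)

lemmas mult_c = mult_One mult_W mult_X mult_Xs1 mult_Xs2 mult_Xs3

lemma cb8: obtains "c = One" | "c = W I1" | "c = W I2" | "c = W I3" | "c = X" | "c = Xs I1" | "c = Xs I2" | "c = Xs I3"
proof (cases c)
  case (W i) thus ?thesis using that by (cases i) simp_all
next
  case (Xs i) thus ?thesis using that by (cases i) simp_all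
qed (use that in simp_all)

lemma jck_ext: "f One = g One \<Longrightarrow> f (W I1) = g (W I1) \<Longrightarrow> f (W I2) = g (W I2) \<Longrightarrow> f (W I3) = g (W I3)
  \<Longrightarrow> f X = g X \<Longrightarrow> f (Xs I1) = g (Xs I1) \<Longrightarrow> f (Xs I2) = g (Xs I2) \<Longrightarrow> f (Xs I3) = g (Xs I3) \<Longrightarrow> f = g"
  apply (rule ext) subgoal for x by (cases x rule: cb8) auto done

lemma mult_0_left: "\<delta> 0 = 0 \<Longrightarrow> jck_mult \<delta> (\<lambda>_. 0) v = (\<lambda>_. 0)"
  by (rule jck_ext; simp add: mult_c)

lemma mult_One_left: "\<delta> 0 = 0 \<Longrightarrow> jck_mult \<delta> (single One g) v = (\<lambda>c. g * v c)"
  by (rule jck_ext; simp add: mult_c single_def)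

definition ov :: "'z::comm_ring_1 \<Rightarrow> (idx \<Rightarrow> 'z) \<Rightarrow> 'z jck" where
  "ov a A = (\<lambda>c. case c of X \<Rightarrow> a | Xs k \<Rightarrow> A k | _ \<Rightarrow> 0)"

lemma ov_eq: "u \<in> J_odd \<Longrightarrow> u = ov (u X) (\<lambda>k. u (Xs k))"
  by (auto simp: ov_def J_odd_def fun_eq_iff split: cb.split)

lemma key:
  fixes D :: "'z::comm_ring_1 jck \<Rightarrow> 'z jck"
  assumes d0: "\<delta> 0 = 0" and d1: "\<delta> 1 = 0"
   and two: "\<forall>a::'z. (\<forall>f. (a + a) * \<delta> f = 0) \<longrightarrow> a = 0"
   and add: "\<forall>u v. D (jck_add u v) = jck_add (D u) (D v)"
   and der: "\<forall>u v. D (jck_mult \<delta> u v) = jck_add (jck_mult \<delta> (D u) v) (jck_mult \<delta> u (D v))"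
   and odd: "\<forall>u\<in>J_odd. D u \<in> J_odd"
   and ev: "\<forall>u\<in>J_even. D u = (\<lambda>_. 0)"
  shows "\<forall>u\<in>J_odd. D u = (\<lambda>_. 0)"
proof -
  have der': "D (jck_mult \<delta> u v) = jck_add (jck_mult \<delta> (D u) v) (jck_mult \<delta> u (D v))" for u v
    using der by blast
  have evs: "D (single b g) = (\<lambda>_. 0)" if "\<not> cb_odd b" for b g
    using ev that by (auto simp: J_even_def single_def)
  have Dsingle: "D (single b g) = (\<lambda>c. g * D (single b 1) c)" for b g
  proof -
    have "single b g = jck_mult \<delta> (single One g) (single b 1)"
      by (subst mult_One_left[of \<delta>, OF d0]) (simp add: single_def fun_eq_iff)
    hence "D (single b g) = jck_add (jck_mult \<delta> (D (single One g)) (single b 1)) (jck_mult \<delta> (single One g) (D (single b 1)))"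
      using der by simp
    also have "\<dots> = (\<lambda>c. g * D (single b 1) c)"
      by (simp add: evs mult_0_left d0 mult_One_left jck_add_def)
    finally show ?thesis .
  qed
  define a where "a = D (single X 1) X"
  define A where "A k = D (single X 1) (Xs k)" for k
  define b where "b j = D (single (Xs j) 1) X" for j
  define B where "B j k = D (single (Xs j) 1) (Xs k)" for j k
  have Dx: "D (single X 1) = ov a A"
    unfolding a_def A_def by (rule ov_eq) (use odd in \<open>auto simp: J_odd_def single_def\<close>)
  have Dxj: "D (single (Xs j) 1) = ov (b j) (B j)" for j
    unfolding b_def B_def by (rule ov_eq) (use odd in \<open>auto simp: J_odd_def single_def\<close>)
  have stepA: "jck_add (jck_mult \<delta> (ov a A) (single (Xs j) 1)) (jck_mult \<delta> (single X 1) (ov (b j) (B j))) = (\<lambda>_. 0)" for j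
  proof -
    have "jck_mult \<delta> (single X 1) (single (Xs j) 1) \<in> J_even"
      unfolding J_even_def
      apply clarify
      subgoal for c by (cases c rule: cb8; cases j; simp add: mult_c single_def d0 d1)
      done
    thus ?thesis using ev der'[of "single X 1" "single (Xs j) 1"] Dx Dxj by simp
  qed
  have BA: "B j k = (if k = j then - a else 0)" for j k
    using fun_cong[OF stepA[of j], of "W k"]
    by (cases j; cases k; simp add: jck_add_def mult_c ov_def single_def d0 d1)
  have stepW: "jck_mult \<delta> (single (W i) 1) (ov (b j) (B j)) = (\<lambda>c. - ov (b k) (B k) c)"
    if "jck_mult \<delta> (single (W i) 1) (single (Xs j) 1) = single (Xs k) (-1)" for i j k
  proof -
    have "D (single (Xs k) (-1)) = jck_add (jck_mult \<delta> (D (single (W i) 1)) (single (Xs j) 1)) (jck_mult \<delta> (single (W i) 1) (D (single (Xs j) 1)))"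
      using der'[of "single (W i) 1" "single (Xs j) 1"] that by simp
    thus ?thesis by (simp add: Dsingle[of "Xs k" "-1"] evs mult_0_left d0 jck_add_def Dxj)
  qed
  have b0: "b k = 0" for k
  proof (cases k)
    case I1
    have "jck_mult \<delta> (single (W I3) 1) (single (Xs I2) 1) = single (Xs I1) (-1)"
      by (rule jck_ext; simp add: mult_c single_def d0 d1)
    from fun_cong[OF stepW[OF this], of X] show ?thesis using I1 by (simp add: mult_c single_def ov_def)
  next
    case I2
    have "jck_mult \<delta> (single (W I1) 1) (single (Xs I3) 1) = single (Xs I2) (-1)"
      by (rule jck_ext; simp add: mult_c single_def d0 d1)
    from fun_cong[OF stepW[OF this], of X] show ?thesis using I2 by (simp add: mult_c single_def ov_def)
  next
    case I3
    have "jck_mult \<delta> (single (W I1) 1) (single (Xs I2) 1) = single (Xs I3) (-1)"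
      by (rule jck_ext; simp add: mult_c single_def d0 d1)
    from fun_cong[OF stepW[OF this], of X] show ?thesis using I3 by (simp add: mult_c single_def ov_def)
  qed
  have stepB: "jck_mult \<delta> (single (W i) f) (ov a A) = (\<lambda>c. \<delta> f * ov (b i) (B i) c)" for i f
  proof -
    have e: "jck_mult \<delta> (single (W i) f) (single X 1) = single (Xs i) (\<delta> f)"
      by (cases i; rule jck_ext; simp add: mult_c single_def d0 d1)
    have "D (single (Xs i) (\<delta> f)) = jck_add (jck_mult \<delta> (D (single (W i) f)) (single X 1)) (jck_mult \<delta> (single (W i) f) (D (single X 1)))"
      using der'[of "single (W i) f" "single X 1"] e by simp
    thus ?thesis by (simp add: Dsingle[of "Xs i" "\<delta> f"] evs mult_0_left d0 jck_add_def Dxj Dx)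
  qed
  have "(a + a) * \<delta> f = 0" for f
    using fun_cong[OF stepB[of I1 f], of "Xs I1"] by (simp add: mult_c single_def ov_def BA d0 algebra_simps)
  hence a0: "a = 0" using two by blast
  have A0: "A k = 0" for k
    using fun_cong[OF stepB[of I1 1], of "Xs I2"] fun_cong[OF stepB[of I1 1], of "Xs I3"]
      fun_cong[OF stepB[of I2 1], of "Xs I3"]
    by (cases k; simp add: mult_c single_def ov_def BA d0 d1)
  have Dx0: "D (single X g) = (\<lambda>_. 0)" for g
    by (subst Dsingle) (simp add: Dx ov_def a0 A0 fun_eq_iff split: cb.split)
  have Dxj0: "D (single (Xs j) g) = (\<lambda>_. 0)" for j g
    by (subst Dsingle) (simp add: Dxj ov_def a0 b0 BA fun_eq_iff split: cb.split)
  show ?thesis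
  proof
    fix u :: "'z jck" assume u: "u \<in> J_odd"
    have "u = jck_add (single X (u X)) (jck_add (single (Xs I1) (u (Xs I1))) (jck_add (single (Xs I2) (u (Xs I2))) (single (Xs I3) (u (Xs I3)))))"
      using u by (intro jck_ext; simp add: J_odd_def jck_add_def single_def)
    hence "D u = D (jck_add (single X (u X)) (jck_add (single (Xs I1) (u (Xs I1))) (jck_add (single (Xs I2) (u (Xs I2))) (single (Xs I3) (u (Xs I3))))))"
      by (rule arg_cong)
    also have "\<dots> = jck_add (D (single X (u X))) (jck_add (D (single (Xs I1) (u (Xs I1)))) (jck_add (D (single (Xs I2) (u (Xs I2)))) (D (single (Xs I3) (u (Xs I3))))))"
      using add by simp
    finally show "D u = (\<lambda>_. 0)" by (simp add: Dx0 Dxj0 jck_add_def)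
  qed
qed

lemma bprod_diff_left:
  assumes "\<And>x y. \<delta> (x - y) = \<delta> x - \<delta> y"
  shows "bprod \<delta> p (f - f') q g c = bprod \<delta> p f q g c - bprod \<delta> p f' q g c"
  by (cases p; cases q; simp add: single_def cross_vec_def assms algebra_simps split: cb.split)

lemma bprod_diff_right:
  assumes "\<And>x y. \<delta> (x - y) = \<delta> x - \<delta> y"
  shows "bprod \<delta> p g q (f - f') c = bprod \<delta> p g q f c - bprod \<delta> p g q f' c"
  by (cases p; cases q; simp add: single_def cross_vec_def assms algebra_simps split: cb.split)

lemma mult_diff_left:
  assumes "\<And>x y. \<delta> (x - y) = \<delta> x - \<delta> y"
  shows "jck_mult \<delta> (\<lambda>c. p c - q c) v = (\<lambda>c. jck_mult \<delta> p v c - jck_mult \<delta> q v c)"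
  unfolding jck_mult_def by (simp add: bprod_diff_left[OF assms] sum_subtractf)

lemma mult_diff_right:
  assumes "\<And>x y. \<delta> (x - y) = \<delta> x - \<delta> y"
  shows "jck_mult \<delta> v (\<lambda>c. p c - q c) = (\<lambda>c. jck_mult \<delta> v p c - jck_mult \<delta> v q c)"
  unfolding jck_mult_def by (simp add: bprod_diff_right[OF assms] sum_subtractf)

theorem mainTheorem3:
  fixes sc :: "'f::field \<Rightarrow> 'z::comm_ring_1 \<Rightarrow> 'z" and \<delta> :: "'z \<Rightarrow> 'z"
  assumes "(2::'f) \<noteq> 0"
    and "is_F_algebra sc"
    and "is_derivation sc \<delta>"
    and "span_cond sc \<delta>"
  shows "inj_on (\<lambda>d. restrict d J_even) {d. even_der sc \<delta> d}"
proof -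
  have mod: "module sc" and scm: "\<And>a x y. sc a (x * y) = sc a x * y"
    using assms(2) by (auto simp: is_F_algebra_def)
  have dadd: "\<And>x y. \<delta> (x + y) = \<delta> x + \<delta> y" and dmul: "\<And>x y. \<delta> (x * y) = \<delta> x * y + x * \<delta> y"
    using assms(3) by (auto simp: is_derivation_def)
  have d0: "\<delta> 0 = 0" using dadd[of 0 0] by simp
  have d1: "\<delta> 1 = 0" using dmul[of 1 1] by simp
  have ddiff: "\<delta> (x - y) = \<delta> x - \<delta> y" for x y
    using dadd[of "x - y" y] by (simp add: algebra_simps)
  have two: "\<forall>a::'z. (\<forall>f. (a + a) * \<delta> f = 0) \<longrightarrow> a = 0"
  proof (intro allI impI)
    fix a :: 'z assume h: "\<forall>f. (a + a) * \<delta> f = 0"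
    obtain n c f g where one: "(1::'z) = (\<Sum>i<(n::nat). sc (c i) (f i * \<delta> (g i)))"
      using assms(4) unfolding span_cond_def by blast
    have "a + a = (a + a) * (\<Sum>i<n. sc (c i) (f i * \<delta> (g i)))" by (simp flip: one)
    also have "\<dots> = (\<Sum>i<n. sc (c i) (f i * \<delta> (g i) * (a + a)))"
      unfolding sum_distrib_left by (rule sum.cong[OF refl]) (metis scm mult.commute)
    also have "\<dots> = 0"
    proof (rule sum.neutral, rule ballI)
      fix i
      have "f i * \<delta> (g i) * (a + a) = f i * ((a + a) * \<delta> (g i))" by (simp add: algebra_simps)
      also have "\<dots> = 0" using h by simp
      finally show "sc (c i) (f i * \<delta> (g i) * (a + a)) = 0"
        using module.scale_zero_right[OF mod] by simp
    qed
    finally have aa: "a + a = 0" .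
    have "a = sc 1 a" using module.scale_one[OF mod] by simp
    also have "(1::'f) = 1/2 + 1/2" using assms(1) by (simp add: field_simps)
    also have "sc (1/2 + 1/2) a = sc (1/2) a + sc (1/2) a"
      by (rule module.scale_left_distrib[OF mod])
    also have "\<dots> = sc (1/2) (a + a)"
      by (rule module.scale_right_distrib[OF mod, symmetric])
    also have "\<dots> = 0" using aa module.scale_zero_right[OF mod] by simp
    finally show "a = 0" .
  qed
  show ?thesis
  proof (rule inj_onI)
    fix d1 d2 assume e1: "d1 \<in> {d. even_der sc \<delta> d}" and e2: "d2 \<in> {d. even_der sc \<delta> d}"
      and r: "restrict d1 J_even = restrict d2 J_even"
    define D where "D u = (\<lambda>c. d1 u c - d2 u c)" for u
    have a1: "\<forall>u v. d1 (jck_add u v) = jck_add (d1 u) (d1 v)" and a2: "\<forall>u v. d2 (jck_add u v) = jck_add (d2 u) (d2 v)"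
      and m1: "\<forall>u v. d1 (jck_mult \<delta> u v) = jck_add (jck_mult \<delta> (d1 u) v) (jck_mult \<delta> u (d1 v))"
      and m2: "\<forall>u v. d2 (jck_mult \<delta> u v) = jck_add (jck_mult \<delta> (d2 u) v) (jck_mult \<delta> u (d2 v))"
      and o1: "d1 ` J_odd \<subseteq> J_odd" and o2: "d2 ` J_odd \<subseteq> J_odd"
      using e1 e2 by (auto simp: even_der_def)
    have add: "\<forall>u v. D (jck_add u v) = jck_add (D u) (D v)"
      using a1 a2 by (simp add: D_def jck_add_def fun_eq_iff algebra_simps)
    have der: "\<forall>u v. D (jck_mult \<delta> u v) = jck_add (jck_mult \<delta> (D u) v) (jck_mult \<delta> u (D v))"
      using m1 m2 by (simp add: D_def jck_add_def mult_diff_left mult_diff_right ddiff fun_eq_iff algebra_simps)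
    have odd: "\<forall>u\<in>J_odd. D u \<in> J_odd"
    proof
      fix u :: "'z jck" assume "u \<in> J_odd"
      hence "d1 u \<in> J_odd" "d2 u \<in> J_odd" using o1 o2 by blast+
      thus "D u \<in> J_odd" by (simp add: D_def J_odd_def)
    qed
    have ev: "\<forall>u\<in>J_even. D u = (\<lambda>_. 0)"
    proof
      fix u :: "'z jck" assume u: "u \<in> J_even"
      have "d1 u = d2 u" using fun_cong[OF r, of u] u by simp
      thus "D u = (\<lambda>_. 0)" by (simp add: D_def)
    qed
    have Dodd: "\<forall>u\<in>J_odd. D u = (\<lambda>_. 0)"
      by (rule key[OF d0 d1 two add der odd ev])
    show "d1 = d2"
    proof
      fix u :: "'z jck"
      define ue where "ue = (\<lambda>c. if cb_odd c then 0 else u c)"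
      define uo where "uo = (\<lambda>c. if cb_odd c then u c else 0)"
      have "u = jck_add ue uo" by (simp add: ue_def uo_def jck_add_def fun_eq_iff)
      hence "D u = jck_add (D ue) (D uo)" using add by simp
      also have "\<dots> = (\<lambda>_. 0)"
        using ev Dodd by (simp add: ue_def uo_def J_even_def J_odd_def jck_add_def)
      finally show "d1 u = d2 u" by (simp add: D_def fun_eq_iff)
    qed
  qed
qed
end
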